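(* For all nonnegative nonzero vectors $x,y\in\mathbb{R}^n$, $|\sin(x,y)|\le D(x,y)$.
   Context: $\sin(x,y)$ is the sine of the angle between $x$ and $y$, and $$D(x,y)=\frac{\left\|\frac{y}{\|y\|_1}-\frac{x}{\|x\|_1}\right\|_2}{\left\|\frac{y}{\|y\|_1}\right\|_2}.$$ *)

theory Defs
  imports "HOL-Analysis.Analysis"
begin

definition norm1 :: "real ^ 'n \<Rightarrow> real" where
  "norm1 x = (\<Sum>i\<in>UNIV. \<bar>x $ i\<bar>)"

definition vec_angle :: "real ^ 'n \<Rightarrow> real ^ 'n \<Rightarrow> real" where
  "vec_angle x y = arccos ((x \<bullet> y) / (norm x * norm y))"

definition sin_angle :: "real ^ 'n \<Rightarrow> real ^ 'n \<Rightarrow> real" where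
  "sin_angle x y = sin (vec_angle x y)"

definition Dist_rel :: "real ^ 'n \<Rightarrow> real ^ 'n \<Rightarrow> real" where
  "Dist_rel x y = norm ((1 / norm1 y) *\<^sub>R y - (1 / norm1 x) *\<^sub>R x) / norm ((1 / norm1 y) *\<^sub>R y)"

end

theory Submission
  imports Defs
begin

lemma norm1_pos:
  fixes x :: "real ^ 'n"
  assumes "x \<noteq> 0"
  shows "norm1 x > 0"
proof -
  obtain i where i: "x $ i \<noteq> 0" using assms by (metis vec_eq_iff zero_index)
  have "\<bar>x $ i\<bar> \<le> (\<Sum>j\<in>UNIV. \<bar>x $ j\<bar>)"
    by (rule member_le_sum) auto
  then show ?thesis using i unfolding norm1_def by linarith
qed

lemma key:
  fixes u v :: "real ^ 'n"
  assumes "u \<noteq> 0" "v \<noteq> 0"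
  shows "sqrt (1 - ((v \<bullet> u) / (norm v * norm u))\<^sup>2) * norm u \<le> norm (u - v)"
proof -
  define p where "p = v \<bullet> u"
  define a where "a = norm u"
  define b where "b = norm v"
  have a: "a > 0" and b: "b > 0" using assms by (auto simp: a_def b_def)
  have cs: "\<bar>p\<bar> \<le> b * a" unfolding p_def a_def b_def by (rule Cauchy_Schwarz_ineq2)
  have e: "(norm (u - v))\<^sup>2 = a\<^sup>2 - 2 * p + b\<^sup>2"
    unfolding a_def b_def p_def
    by (simp add: power2_norm_eq_inner inner_diff_left inner_diff_right inner_commute)
  have lhs: "(sqrt (1 - (p / (b * a))\<^sup>2) * a)\<^sup>2 = a\<^sup>2 - p\<^sup>2 / b\<^sup>2"
  proof -
    have "(p / (b * a))\<^sup>2 \<le> 1" using cs a b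
      by (simp add: power_divide abs_le_square_iff[symmetric] divide_le_eq_1 power2_abs)
    then have "(sqrt (1 - (p / (b * a))\<^sup>2))\<^sup>2 = 1 - (p / (b * a))\<^sup>2" by simp
    then show ?thesis using a b by (simp add: power_mult_distrib field_simps)
  qed
  have "a\<^sup>2 - p\<^sup>2 / b\<^sup>2 \<le> a\<^sup>2 - 2 * p + b\<^sup>2"
  proof -
    have "0 \<le> (b\<^sup>2 - p)\<^sup>2 / b\<^sup>2" by simp
    also have "(b\<^sup>2 - p)\<^sup>2 / b\<^sup>2 = b\<^sup>2 - 2 * p + p\<^sup>2 / b\<^sup>2" using b
      by (simp add: field_simps power2_eq_square)
    finally show ?thesis by simp
  qed
  then have "(sqrt (1 - (p / (b * a))\<^sup>2) * a)\<^sup>2 \<le> (norm (u - v))\<^sup>2" using lhs e by simp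
  then show ?thesis unfolding p_def a_def b_def
    by (meson norm_ge_zero power2_le_imp_le)
qed

theorem lemmaA3:
  fixes x y :: "real ^ 'n"
  assumes "\<forall>i. x $ i \<ge> 0" and "\<forall>i. y $ i \<ge> 0"
    and "x \<noteq> 0" and "y \<noteq> 0"
  shows "\<bar>sin_angle x y\<bar> \<le> Dist_rel x y"
proof -
  define a where "a = 1 / norm1 x"
  define b where "b = 1 / norm1 y"
  have a: "a > 0" and b: "b > 0" using norm1_pos assms(3,4) by (auto simp: a_def b_def)
  define u where "u = b *\<^sub>R y"
  define v where "v = a *\<^sub>R x"
  have u0: "u \<noteq> 0" and v0: "v \<noteq> 0" using a b assms(3,4) by (auto simp: u_def v_def)
  have c: "(x \<bullet> y) / (norm x * norm y) = (v \<bullet> u) / (norm v * norm u)"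
    using a b by (simp add: u_def v_def field_simps)
  have cs: "\<bar>(x \<bullet> y) / (norm x * norm y)\<bar> \<le> 1"
    using Cauchy_Schwarz_ineq2[of x y] assms(3,4)
    by (simp add: abs_div divide_le_eq_1)
  have s: "\<bar>sin_angle x y\<bar> = sqrt (1 - ((v \<bullet> u) / (norm v * norm u))\<^sup>2)"
  proof -
    have h: "\<bar>(v \<bullet> u) / (norm v * norm u)\<bar> \<le> 1" using cs c by simp
    then have "((v \<bullet> u) / (norm v * norm u))\<^sup>2 \<le> 1" by (simp add: abs_square_le_1)
    then show ?thesis using c h
      unfolding sin_angle_def vec_angle_def by (simp add: sin_arccos_abs del: abs_divide)
  qed
  have "sqrt (1 - ((v \<bullet> u) / (norm v * norm u))\<^sup>2) \<le> norm (u - v) / norm u"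
    using key[OF u0 v0] u0 by (simp add: field_simps)
  then show ?thesis using s unfolding Dist_rel_def a_def b_def u_def v_def by simp
qed

end
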